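(* Let $\mathbb{G}$ be a Hausdorff topological group, and suppose that either (i) the action $\mathbb{G}\times\mathcal{C}\mathbb{G}\to\mathcal{C}\mathbb{G}$, $(h,[g,t])\mapsto[hg,t]$, on the quotient-topologized cone is discontinuous, or (ii) on $\mathbb{G}\times\mathcal{C}\mathbb{G}$ the quotient topology induced by $\mathbb{G}\times\mathbb{G}\times[0,1]\to\mathbb{G}\times\mathcal{C}\mathbb{G}$ differs from the product topology. Then the diagonal right translation action of $\mathbb{G}$ on the quotient-topologized join $\mathbb{G}*\mathbb{G}$ is discontinuous, and hence so is the diagonal right translation action of $\mathbb{G}$ on $E_n\mathbb{G}$ for every $1\le n\le\infty$.
   Context: The join $X*Y:=X\times Y\times[0,1]/\sim$ with $(x,y,0)\sim(x,y',0)$, $(x,y,1)\sim(x',y,1)$, points written $tx+(1-t)y$; more generally $E_n\mathbb{G}:=\mathbb{G}^{*(n+1)}$ is the set of formal convex combinations $\sum_{i=0}^n t_ig_i$ ($t_i\ge0$, $\sum t_i=1$, with $g_i$ irrelevant when $t_i=0$), topologized as a quotient of $\mathbb{G}^{n+1}\times\Delta^n$ ($\Delta^n$ the $n$-simplex), and $E_\infty\mathbb{G}=E\mathbb{G}:=\bigcup_n E_n\mathbb{G}$ carries the colimit topology. The cone is $\mathcal{C}\mathbb{G}:=\mathbb{G}\times[0,1]/(\mathbb{G}\times\{0\})$ with the quotient topology. $\mathbb{G}$ acts on $E_n\mathbb{G}$ on the right diagonally: $(\sum t_ig_i)g=\sum t_i(g_ig)$; continuity refers to the map $E_n\mathbb{G}\times\mathbb{G}\to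 E_n\mathbb{G}$ with the product topology on the domain. *)

theory Defs
  imports "HOL-Analysis.Analysis" "HOL-Algebra.Group"
begin

definition topological_group :: "('g, 'b) monoid_scheme \<Rightarrow> 'g topology \<Rightarrow> bool" where
  "topological_group G T \<longleftrightarrow> group G \<and> topspace T = carrier G \<and>
     continuous_map (prod_topology T T) T (\<lambda>(x, y). x \<otimes>\<^bsub>G\<^esub> y) \<and>
     continuous_map T T (\<lambda>x. inv\<^bsub>G\<^esub> x)"

definition quot_top :: "'a topology \<Rightarrow> ('a \<Rightarrow> 'b) \<Rightarrow> 'b topology" where
  "quot_top X f = topology (\<lambda>U. U \<subseteq> f ` topspace X \<and> openin X {x \<in> topspace X. f x \<in> U})"

lemma istopology_quot_top:
  "istopology (\<lambda>U. U \<subseteq> f ` topspace X \<and> openin X {x \<in> topspace X. f x \<in> U})"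
proof -
  have i: "{x \<in> topspace X. f x \<in> S \<inter> T} = {x \<in> topspace X. f x \<in> S} \<inter> {x \<in> topspace X. f x \<in> T}"
    for S T by auto
  have u: "{x \<in> topspace X. f x \<in> \<Union>K} = (\<Union>S\<in>K. {x \<in> topspace X. f x \<in> S})" for K by auto
  show ?thesis unfolding istopology_def i u by auto
qed

lemma openin_quot_top:
  "openin (quot_top X f) U \<longleftrightarrow> U \<subseteq> f ` topspace X \<and> openin X {x \<in> topspace X. f x \<in> U}"
  unfolding quot_top_def by (simp add: topology_inverse'[OF istopology_quot_top])

definition unit_interval :: "real topology" where
  "unit_interval = subtopology euclideanreal {0..1}"

text \<open>A cone point [g,t] is represented canonically by (t, Some g) for t > 0 and (0, None)
  for the apex t = 0.\<close>
definition cone_pt :: "'g \<Rightarrow> real \<Rightarrow> real \<times> 'g option" where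
  "cone_pt g t = (t, if t = 0 then None else Some g)"

definition cone_top :: "'g topology \<Rightarrow> (real \<times> 'g option) topology" where
  "cone_top T = quot_top (prod_topology T unit_interval) (\<lambda>(g, t). cone_pt g t)"

text \<open>A join point t x + (1-t) y is represented canonically by
  (t, x if t > 0, y if t < 1).\<close>
definition join_pt :: "'g \<Rightarrow> 'g \<Rightarrow> real \<Rightarrow> real \<times> 'g option \<times> 'g option" where
  "join_pt x y t = (t, if t = 0 then None else Some x, if t = 1 then None else Some y)"

definition join_top :: "'g topology \<Rightarrow> (real \<times> 'g option \<times> 'g option) topology" where
  "join_top T = quot_top (prod_topology T (prod_topology T unit_interval)) (\<lambda>(x, y, t). join_pt x y t)"

definition join_ract :: "('g, 'b) monoid_scheme \<Rightarrow> (real \<times> 'g option \<times> 'g option) \<Rightarrow> 'g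
    \<Rightarrow> real \<times> 'g option \<times> 'g option" where
  "join_ract G p g = (fst p, map_option (\<lambda>a. a \<otimes>\<^bsub>G\<^esub> g) (fst (snd p)),
                             map_option (\<lambda>a. a \<otimes>\<^bsub>G\<^esub> g) (snd (snd p)))"

text \<open>Formal convex combinations sum_{i=0}^n t_i g_i, represented canonically as functions
  i \<mapsto> (t_i, Some g_i if t_i > 0, None if t_i = 0), with (0, None) for i > n.\<close>
definition simplex_top :: "nat \<Rightarrow> (nat \<Rightarrow> real) topology" where
  "simplex_top n = subtopology (product_topology (\<lambda>_. euclideanreal) {..n})
      {t. (\<forall>i\<le>n. 0 \<le> t i) \<and> sum t {..n} = 1}"

definition En_pt :: "nat \<Rightarrow> (nat \<Rightarrow> 'g) \<Rightarrow> (nat \<Rightarrow> real) \<Rightarrow> nat \<Rightarrow> real \<times> 'g option" where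
  "En_pt n g t = (\<lambda>i. if i \<le> n then (t i, if t i = 0 then None else Some (g i)) else (0, None))"

definition En_top :: "'g topology \<Rightarrow> nat \<Rightarrow> (nat \<Rightarrow> real \<times> 'g option) topology" where
  "En_top T n = quot_top (prod_topology (product_topology (\<lambda>_. T) {..n}) (simplex_top n))
                         (\<lambda>(g, t). En_pt n g t)"

text \<open>E_infinity: the union of the E_n (nested via the canonical representation) with the
  colimit topology.\<close>
definition Einf_top :: "'g topology \<Rightarrow> (nat \<Rightarrow> real \<times> 'g option) topology" where
  "Einf_top T = topology (\<lambda>U. U \<subseteq> (\<Union>n. topspace (En_top T n)) \<and>
                             (\<forall>n. openin (En_top T n) (U \<inter> topspace (En_top T n))))"

definition En_ract :: "('g, 'b) monoid_scheme \<Rightarrow> (nat \<Rightarrow> real \<times> 'g option) \<Rightarrow> 'g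
    \<Rightarrow> nat \<Rightarrow> real \<times> 'g option" where
  "En_ract G p g = (\<lambda>i. (fst (p i), map_option (\<lambda>a. a \<otimes>\<^bsub>G\<^esub> g) (snd (p i))))"

end

theory Submission
  imports Defs
begin


lemma topspace_quot_top: "topspace (quot_top X f) = f ` topspace X"
proof
  show "topspace (quot_top X f) \<subseteq> f ` topspace X"
    using openin_topspace[of "quot_top X f"] unfolding openin_quot_top by (rule conjunct1)
  have e: "{x \<in> topspace X. f x \<in> f ` topspace X} = topspace X" by auto
  have "openin (quot_top X f) (f ` topspace X)" unfolding openin_quot_top e by simp
  then show "f ` topspace X \<subseteq> topspace (quot_top X f)" by (simp add: openin_subset)
qed

lemma quot_cont: "continuous_map X (quot_top X f) f"
  unfolding continuous_map_def by (auto simp: topspace_quot_top openin_quot_top)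

lemma quot_univ:
  assumes "continuous_map X Y (\<lambda>x. h (f x))"
  shows "continuous_map (quot_top X f) Y h"
  unfolding continuous_map_def
proof (intro conjI allI impI)
  show "h \<in> topspace (quot_top X f) \<rightarrow> topspace Y"
    using assms by (auto simp: topspace_quot_top continuous_map_def)
  fix W assume "openin Y W"
  have e: "{x \<in> topspace X. f x \<in> {p \<in> topspace (quot_top X f). h p \<in> W}} = {x \<in> topspace X. h (f x) \<in> W}"
    by (auto simp: topspace_quot_top)
  show "openin (quot_top X f) {x \<in> topspace (quot_top X f). h x \<in> W}"
    unfolding openin_quot_top
    using e openin_continuous_map_preimage[OF assms \<open>openin Y W\<close>] by (auto simp: topspace_quot_top)
qed

lemma tg_group: "topological_group G T \<Longrightarrow> group G"
  and tg_space: "topological_group G T \<Longrightarrow> topspace T = carrier G"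
  by (auto simp: topological_group_def)

lemma mult_cont:
  assumes "topological_group G T" "continuous_map Z T f" "continuous_map Z T g"
  shows "continuous_map Z T (\<lambda>x. f x \<otimes>\<^bsub>G\<^esub> g x)"
proof -
  have m: "continuous_map (prod_topology T T) T (\<lambda>(x, y). x \<otimes>\<^bsub>G\<^esub> y)"
    using assms(1) by (simp add: topological_group_def)
  from continuous_map_compose[OF continuous_map_pairedI[OF assms(2,3)] m]
  show ?thesis by (simp add: o_def)
qed

lemma inv_cont:
  assumes "topological_group G T" "continuous_map Z T f"
  shows "continuous_map Z T (\<lambda>x. inv\<^bsub>G\<^esub> (f x))"
proof -
  have m: "continuous_map T T (\<lambda>x. inv\<^bsub>G\<^esub> x)"
    using assms(1) by (simp add: topological_group_def)
  from continuous_map_compose[OF assms(2) m]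
  show ?thesis by (simp add: o_def)
qed

lemma topspace_unit_interval[simp]: "topspace unit_interval = {0..1}"
  by (simp add: unit_interval_def)

lemma cont_into_unit:
  "continuous_map Z euclideanreal f \<Longrightarrow> (\<And>x. x \<in> topspace Z \<Longrightarrow> f x \<in> {0..1}) \<Longrightarrow>
   continuous_map Z unit_interval f"
  unfolding unit_interval_def continuous_map_in_subtopology by auto

lemma cont_from_unit: "continuous_map unit_interval euclideanreal (\<lambda>x. x)"
  using continuous_map_id_subt[of euclideanreal "{0..1}"] unfolding unit_interval_def id_def .

lemma cone_map: "continuous_map (prod_topology T unit_interval) (cone_top T) (\<lambda>(g, t). cone_pt g t)"
  unfolding cone_top_def by (rule quot_cont)

lemma topspace_cone: "topspace (cone_top T) = (\<lambda>(g, t). cone_pt g t) ` (topspace T \<times> {0..1})"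
  unfolding cone_top_def topspace_quot_top by simp

lemma quot_eq_prod:
  assumes tg: "topological_group G T"
    and H: "\<And>U. U \<subseteq> topspace (prod_topology T (cone_top T)) \<Longrightarrow>
       openin (prod_topology T (prod_topology T unit_interval))
         {x \<in> topspace (prod_topology T (prod_topology T unit_interval)). (\<lambda>(h, g, t). (h, cone_pt g t)) x \<in> U}
       \<Longrightarrow> openin (prod_topology T (cone_top T)) U"
  shows "quot_top (prod_topology T (prod_topology T unit_interval)) (\<lambda>(h, g, t). (h, cone_pt g t))
             = prod_topology T (cone_top T)"
proof -
  let ?X = "prod_topology T (prod_topology T unit_interval)"
  let ?q = "(\<lambda>(h, g, t). (h, cone_pt g t)) :: 'a \<times> 'a \<times> real \<Rightarrow> _"
  have qe: "?q = (\<lambda>x. (fst x, (\<lambda>(g, t). cone_pt g t) (snd x)))" by (auto simp: fun_eq_iff)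
  have qc: "continuous_map ?X (prod_topology T (cone_top T)) ?q"
    unfolding qe
    by (intro continuous_map_pairedI continuous_map_fst continuous_map_compose[OF continuous_map_snd cone_map, unfolded o_def])
  have img: "?q ` topspace ?X = topspace (prod_topology T (cone_top T))"
    apply (auto simp: topspace_cone image_iff)
    apply (metis atLeastAtMost_iff)+
    done
  show ?thesis
    unfolding topology_eq openin_quot_top
  proof (intro allI iffI)
    fix S assume a: "S \<subseteq> ?q ` topspace ?X \<and> openin ?X {x \<in> topspace ?X. ?q x \<in> S}"
    show "openin (prod_topology T (cone_top T)) S"
      by (rule H[OF conjunct1[OF a[unfolded img]] conjunct2[OF a]])
  next
    fix S assume a: "openin (prod_topology T (cone_top T)) S"
    show "S \<subseteq> ?q ` topspace ?X \<and> openin ?X {x \<in> topspace ?X. ?q x \<in> S}"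
      unfolding img using openin_subset[OF a] openin_continuous_map_preimage[OF qc a] by (rule conjI)
  qed
qed

lemma cone_act_cont:
  assumes tg: "topological_group G T"
    and eq: "quot_top (prod_topology T (prod_topology T unit_interval)) (\<lambda>(h, g, t). (h, cone_pt g t))
             = prod_topology T (cone_top T)"
  shows "continuous_map (prod_topology T (cone_top T)) (cone_top T)
              (\<lambda>(h, (t, a)). (t, map_option (\<lambda>g. h \<otimes>\<^bsub>G\<^esub> g) a))"
  unfolding eq[symmetric]
proof (rule quot_univ)
  let ?X = "prod_topology T (prod_topology T unit_interval)"
  have c1: "continuous_map ?X (prod_topology T unit_interval) (\<lambda>x. (fst x \<otimes>\<^bsub>G\<^esub> fst (snd x), snd (snd x)))"
    apply (intro continuous_map_pairedI mult_cont[OF tg])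
      apply (rule continuous_map_fst)
     apply (rule continuous_map_compose[OF continuous_map_snd continuous_map_fst, unfolded o_def])
    apply (rule continuous_map_compose[OF continuous_map_snd continuous_map_snd, unfolded o_def])
    done
  have c2: "continuous_map ?X (cone_top T) (\<lambda>x. (\<lambda>(g, t). cone_pt g t) (fst x \<otimes>\<^bsub>G\<^esub> fst (snd x), snd (snd x)))"
    using continuous_map_compose[OF c1 cone_map] by (simp add: o_def)
  show "continuous_map ?X (cone_top T)
     (\<lambda>x. (\<lambda>(h, (t, a)). (t, map_option (\<lambda>g. h \<otimes>\<^bsub>G\<^esub> g) a)) ((\<lambda>(h, g, t). (h, cone_pt g t)) x))"
    by (rule continuous_map_eq[OF c2]) (simp add: case_prod_unfold cone_pt_def)
qed



lemma key:
  fixes U :: "('g \<times> real \<times> 'g option) set"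
  assumes tg: "topological_group G T"
    and act: "continuous_map (prod_topology Z T) Z (\<lambda>(p, g). A p g)"
    and iota: "continuous_map (cone_top T) Z \<iota>"
    and V: "openin Z V"
    and eq: "\<And>g t h. g \<in> carrier G \<Longrightarrow> 0 \<le> t \<Longrightarrow> t \<le> 1 \<Longrightarrow> h \<in> carrier G \<Longrightarrow>
               (A (\<iota> (cone_pt g t)) h \<in> V \<longleftrightarrow> (h, cone_pt g t) \<in> U)"
    and sub: "U \<subseteq> topspace (prod_topology T (cone_top T))"
  shows "openin (prod_topology T (cone_top T)) U"
proof -
  have c1: "continuous_map (prod_topology (cone_top T) T) (prod_topology Z T) (\<lambda>x. (\<iota> (fst x), snd x))"
    by (intro continuous_map_pairedI continuous_map_snd continuous_map_compose[OF continuous_map_fst iota, unfolded o_def])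
  have psi: "continuous_map (prod_topology (cone_top T) T) Z (\<lambda>x. A (\<iota> (fst x)) (snd x))"
    using continuous_map_compose[OF c1 act] by (simp add: o_def)
  have S: "openin (prod_topology (cone_top T) T) {x \<in> topspace (prod_topology (cone_top T) T). A (\<iota> (fst x)) (snd x) \<in> V}"
    by (rule openin_continuous_map_preimage[OF psi V])
  have sw: "continuous_map (prod_topology T (cone_top T)) (prod_topology (cone_top T) T) (\<lambda>x. (snd x, fst x))"
    by (intro continuous_map_pairedI continuous_map_snd continuous_map_fst)
  have O2: "openin (prod_topology T (cone_top T)) {y \<in> topspace (prod_topology T (cone_top T)). (snd y, fst y) \<in>
      {x \<in> topspace (prod_topology (cone_top T) T). A (\<iota> (fst x)) (snd x) \<in> V}}"
    by (rule openin_continuous_map_preimage[OF sw S])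
  have ts: "topspace T = carrier G" using tg by (rule tg_space)
  have "{y \<in> topspace (prod_topology T (cone_top T)). (snd y, fst y) \<in>
      {x \<in> topspace (prod_topology (cone_top T) T). A (\<iota> (fst x)) (snd x) \<in> V}} = U"
  proof (intro equalityI subsetI)
    fix y assume y: "y \<in> {y \<in> topspace (prod_topology T (cone_top T)). (snd y, fst y) \<in>
      {x \<in> topspace (prod_topology (cone_top T) T). A (\<iota> (fst x)) (snd x) \<in> V}}"
    obtain h c where yhc: "y = (h, c)" by (cases y)
    from y yhc have h: "h \<in> carrier G" and c: "c \<in> topspace (cone_top T)" and AV: "A (\<iota> c) h \<in> V"
      by (auto simp: ts)
    from c obtain g t where g: "g \<in> carrier G" and t: "0 \<le> t" "t \<le> 1" and cg: "c = cone_pt g t"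
      by (auto simp: topspace_cone ts)
    show "y \<in> U" using eq[OF g t h] AV cg yhc by simp
  next
    fix y assume yU: "y \<in> U"
    obtain h c where yhc: "y = (h, c)" by (cases y)
    from yU sub yhc have h: "h \<in> carrier G" and c: "c \<in> topspace (cone_top T)"
      by (auto simp: ts)
    from c obtain g t where g: "g \<in> carrier G" and t: "0 \<le> t" "t \<le> 1" and cg: "c = cone_pt g t"
      by (auto simp: topspace_cone ts)
    have "A (\<iota> c) h \<in> V" using eq[OF g t h] yU cg yhc by simp
    then show "y \<in> {y \<in> topspace (prod_topology T (cone_top T)). (snd y, fst y) \<in>
      {x \<in> topspace (prod_topology (cone_top T) T). A (\<iota> (fst x)) (snd x) \<in> V}}"
      using h c yhc by (simp add: ts)
  qed
  with O2 show ?thesis by simp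
qed

lemma final:
  assumes tg: "topological_group G T"
    and H: "\<And>U. U \<subseteq> topspace (prod_topology T (cone_top T)) \<Longrightarrow>
       openin (prod_topology T (prod_topology T unit_interval))
         {x \<in> topspace (prod_topology T (prod_topology T unit_interval)). (\<lambda>(h, g, t). (h, cone_pt g t)) x \<in> U}
       \<Longrightarrow> openin (prod_topology T (cone_top T)) U"
  shows "\<not> (\<not> continuous_map (prod_topology T (cone_top T)) (cone_top T)
              (\<lambda>(h, (t, a)). (t, map_option (\<lambda>g. h \<otimes>\<^bsub>G\<^esub> g) a))
         \<or> quot_top (prod_topology T (prod_topology T unit_interval)) (\<lambda>(h, g, t). (h, cone_pt g t))
             \<noteq> prod_topology T (cone_top T))"
  using quot_eq_prod[OF tg H] cone_act_cont[OF tg quot_eq_prod[OF tg H]] by blast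



definition iotaJ :: "('g, 'b) monoid_scheme \<Rightarrow> real \<times> 'g option \<Rightarrow> real \<times> 'g option \<times> 'g option" where
  "iotaJ G c = join_pt (the (snd c)) \<one>\<^bsub>G\<^esub> (fst c / 3)"

lemma iotaJ_cone: "iotaJ G (cone_pt g t) = join_pt g \<one>\<^bsub>G\<^esub> (t / 3)"
  by (simp add: iotaJ_def cone_pt_def join_pt_def)

lemma join_ract_pt: "join_ract G (join_pt x y s) h = join_pt (x \<otimes>\<^bsub>G\<^esub> h) (y \<otimes>\<^bsub>G\<^esub> h) s"
  by (simp add: join_ract_def join_pt_def)

lemma fst_join_pt[simp]: "fst (join_pt x y s) = s"
  by (simp add: join_pt_def)

lemma jq_cont: "continuous_map (prod_topology T (prod_topology T unit_interval)) (join_top T) (\<lambda>(x, y, t). join_pt x y t)"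
  unfolding join_top_def by (rule quot_cont)

lemma join_pt_top:
  assumes "x \<in> topspace T" "y \<in> topspace T" "0 \<le> s" "s \<le> 1"
  shows "join_pt x y s \<in> topspace (join_top T)"
  unfolding join_top_def topspace_quot_top
  by (rule rev_image_eqI[of "(x, y, s)"]) (use assms in auto)

lemma snd_real_cont: "continuous_map (prod_topology X unit_interval) euclideanreal snd"
  using continuous_map_compose[OF continuous_map_snd cont_from_unit] by (simp add: o_def)

lemma iotaJ_cont:
  assumes tg: "topological_group G T"
  shows "continuous_map (cone_top T) (join_top T) (iotaJ G)"
  unfolding cone_top_def
proof (rule quot_univ)
  interpret group G by (rule tg_group[OF tg])
  have one: "\<one>\<^bsub>G\<^esub> \<in> topspace T" using tg by (simp add: tg_space)
  have d: "continuous_map (prod_topology T unit_interval) unit_interval (\<lambda>x. snd x / 3)"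
    by (rule cont_into_unit) (auto intro!: continuous_map_real_divide snd_real_cont)
  have c1: "continuous_map (prod_topology T unit_interval) (prod_topology T (prod_topology T unit_interval))
      (\<lambda>x. (fst x, \<one>\<^bsub>G\<^esub>, snd x / 3))"
    by (intro continuous_map_pairedI continuous_map_fst d) (simp add: one)
  have c2: "continuous_map (prod_topology T unit_interval) (join_top T) (\<lambda>x. join_pt (fst x) \<one>\<^bsub>G\<^esub> (snd x / 3))"
    using continuous_map_compose[OF c1 jq_cont] by (simp add: o_def)
  show "continuous_map (prod_topology T unit_interval) (join_top T) (\<lambda>x. iotaJ G ((\<lambda>(g, t). cone_pt g t) x))"
    by (rule continuous_map_eq[OF c2]) (simp add: case_prod_unfold iotaJ_cone)
qed

definition decJ :: "('g, 'b) monoid_scheme \<Rightarrow> real \<times> 'g option \<times> 'g option \<Rightarrow> 'g \<times> real \<times> 'g option" where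
  "decJ G p = (the (snd (snd p)), cone_pt (the (fst (snd p)) \<otimes>\<^bsub>G\<^esub> inv\<^bsub>G\<^esub> (the (snd (snd p)))) (min 1 (3 * fst p)))"

lemma decJ_pt: "s < 1/2 \<Longrightarrow> decJ G (join_pt a b s) = (b, cone_pt (a \<otimes>\<^bsub>G\<^esub> inv\<^bsub>G\<^esub> b) (min 1 (3 * s)))"
  by (simp add: decJ_def join_pt_def cone_pt_def)

lemma triple_cont:
  assumes tg: "topological_group G T"
  shows "continuous_map (prod_topology T (prod_topology T unit_interval)) (prod_topology T (prod_topology T unit_interval))
      (\<lambda>x. (fst (snd x), fst x \<otimes>\<^bsub>G\<^esub> inv\<^bsub>G\<^esub> (fst (snd x)), min 1 (3 * snd (snd x))))"
proof -
  let ?X = "prod_topology T (prod_topology T unit_interval)"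
  have b: "continuous_map ?X T (\<lambda>x. fst (snd x))"
    using continuous_map_compose[OF continuous_map_snd continuous_map_fst] by (simp add: o_def)
  have s: "continuous_map ?X euclideanreal (\<lambda>x. snd (snd x))"
    using continuous_map_compose[OF continuous_map_snd snd_real_cont] by (simp add: o_def)
  have m: "continuous_map ?X unit_interval (\<lambda>x. min 1 (3 * snd (snd x)))"
  proof (rule cont_into_unit)
    show "continuous_map ?X euclideanreal (\<lambda>x. min 1 (3 * snd (snd x)))"
      by (intro continuous_map_real_min continuous_map_real_mult s) simp_all
    fix x assume "x \<in> topspace ?X"
    then show "min 1 (3 * snd (snd x)) \<in> {0..1}" by auto
  qed
  show ?thesis
    by (intro continuous_map_pairedI b m mult_cont[OF tg] inv_cont[OF tg] continuous_map_fst)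
qed

lemma join_case:
  assumes tg: "topological_group G T"
    and cont: "continuous_map (prod_topology (join_top T) T) (join_top T) (\<lambda>(p, g). join_ract G p g)"
    and sub: "U \<subseteq> topspace (prod_topology T (cone_top T))"
    and W: "openin (prod_topology T (prod_topology T unit_interval))
         {x \<in> topspace (prod_topology T (prod_topology T unit_interval)). (\<lambda>(h, g, t). (h, cone_pt g t)) x \<in> U}"
  shows "openin (prod_topology T (cone_top T)) U"
proof -
  let ?X = "prod_topology T (prod_topology T unit_interval)"
  let ?W = "{x \<in> topspace ?X. (\<lambda>(h, g, t). (h, cone_pt g t)) x \<in> U}"
  let ?F = "\<lambda>x. (fst (snd x), fst x \<otimes>\<^bsub>G\<^esub> inv\<^bsub>G\<^esub> (fst (snd x)), min 1 (3 * snd (snd x)))"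
  let ?V = "{p \<in> topspace (join_top T). fst p < 1/2 \<and> decJ G p \<in> U}"
  have grp: "group G" by (rule tg_group[OF tg])
  interpret group G by (rule grp)
  have ts: "topspace T = carrier G" by (rule tg_space[OF tg])
  have s: "continuous_map ?X euclideanreal (\<lambda>x. snd (snd x))"
    using continuous_map_compose[OF continuous_map_snd snd_real_cont] by (simp add: o_def)
  have o1: "openin ?X {x \<in> topspace ?X. snd (snd x) \<in> {..<1/2}}"
    by (rule openin_continuous_map_preimage[OF s]) simp
  have o2: "openin ?X {x \<in> topspace ?X. ?F x \<in> ?W}"
    by (rule openin_continuous_map_preimage[OF triple_cont[OF tg] W])
  have pre: "{x \<in> topspace ?X. (\<lambda>(x, y, t). join_pt x y t) x \<in> ?V} =
      {x \<in> topspace ?X. snd (snd x) \<in> {..<1/2}} \<inter> {x \<in> topspace ?X. ?F x \<in> ?W}"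
  proof (intro equalityI subsetI)
    fix x assume x: "x \<in> {x \<in> topspace ?X. (\<lambda>(x, y, t). join_pt x y t) x \<in> ?V}"
    obtain a b s where xe: "x = (a, b, s)" by (cases x)
    from x xe have a: "a \<in> carrier G" and b: "b \<in> carrier G" and s0: "0 \<le> s" "s \<le> 1"
      and s1: "s < 1/2" and inU: "decJ G (join_pt a b s) \<in> U"
      by (auto simp: ts join_pt_def)
    have "?F x \<in> topspace ?X" using a b s0 grp by (simp add: xe ts)
    moreover have "(\<lambda>(h, g, t). (h, cone_pt g t)) (?F x) \<in> U"
      using inU decJ_pt[where G=G and a=a and b=b, OF s1] by (simp add: xe)
    ultimately show "x \<in> {x \<in> topspace ?X. snd (snd x) \<in> {..<1/2}} \<inter> {x \<in> topspace ?X. ?F x \<in> ?W}"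
      using x s1 xe by simp
  next
    fix x assume x: "x \<in> {x \<in> topspace ?X. snd (snd x) \<in> {..<1/2}} \<inter> {x \<in> topspace ?X. ?F x \<in> ?W}"
    obtain a b s where xe: "x = (a, b, s)" by (cases x)
    from x xe have a: "a \<in> topspace T" and b: "b \<in> topspace T" and s0: "0 \<le> s" "s \<le> 1"
      and s1: "s < 1/2" and inU: "(b, cone_pt (a \<otimes>\<^bsub>G\<^esub> inv\<^bsub>G\<^esub> b) (min 1 (3 * s))) \<in> U"
      by auto
    have "join_pt a b s \<in> ?V"
      using join_pt_top[OF a b s0] s1 inU decJ_pt[where G=G and a=a and b=b, OF s1] by (simp add: join_pt_def)
    then show "x \<in> {x \<in> topspace ?X. (\<lambda>(x, y, t). join_pt x y t) x \<in> ?V}"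
      using x xe by simp
  qed
  have Vo: "openin (join_top T) ?V"
  proof -
    have "?V \<subseteq> (\<lambda>(x, y, t). join_pt x y t) ` topspace ?X"
      using topspace_quot_top[of ?X "\<lambda>(x, y, t). join_pt x y t"] unfolding join_top_def by auto
    moreover have "openin ?X {x \<in> topspace ?X. (\<lambda>(x, y, t). join_pt x y t) x \<in> ?V}"
      unfolding pre by (rule openin_Int[OF o1 o2])
    ultimately show ?thesis unfolding join_top_def openin_quot_top by blast
  qed
  show ?thesis
  proof (rule key[OF tg cont iotaJ_cont[OF tg] Vo _ sub])
    fix g h and t :: real assume g: "g \<in> carrier G" and t: "0 \<le> t" "t \<le> 1" and h: "h \<in> carrier G"
    have e1: "join_ract G (iotaJ G (cone_pt g t)) h = join_pt (g \<otimes>\<^bsub>G\<^esub> h) h (t / 3)"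
      by (simp add: iotaJ_cone join_ract_pt h)
    have tp: "join_pt (g \<otimes>\<^bsub>G\<^esub> h) h (t / 3) \<in> topspace (join_top T)"
      using join_pt_top[of "g \<otimes>\<^bsub>G\<^esub> h" T h "t/3"] g h t grp by (simp add: ts)
    have t3: "t / 3 < 1/2" using t by simp
    have e2: "decJ G (join_pt (g \<otimes>\<^bsub>G\<^esub> h) h (t / 3)) = (h, cone_pt g t)"
      using decJ_pt[where G=G and a="g \<otimes>\<^bsub>G\<^esub> h" and b=h, OF t3] t g h by (simp add: m_assoc)
    show "join_ract G (iotaJ G (cone_pt g t)) h \<in> ?V \<longleftrightarrow> (h, cone_pt g t) \<in> U"
      unfolding e1 using tp t3 e2 by simp
  qed
qed



definition gv2 :: "nat \<Rightarrow> 'g \<Rightarrow> 'g \<Rightarrow> nat \<Rightarrow> 'g" where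
  "gv2 n a b = (\<lambda>i. if i \<le> n then (if i = 0 then a else b) else undefined)"

definition tvec :: "nat \<Rightarrow> real \<Rightarrow> nat \<Rightarrow> real" where
  "tvec n t = (\<lambda>i. if i \<le> n then (if i = 0 then t / 3 else if i = 1 then 1 - t / 3 else 0) else undefined)"

definition iotaE :: "('g, 'b) monoid_scheme \<Rightarrow> nat \<Rightarrow> real \<times> 'g option \<Rightarrow> nat \<Rightarrow> real \<times> 'g option" where
  "iotaE G n c = En_pt n (gv2 n (the (snd c)) \<one>\<^bsub>G\<^esub>) (tvec n (fst c))"

definition decE :: "('g, 'b) monoid_scheme \<Rightarrow> (nat \<Rightarrow> real \<times> 'g option) \<Rightarrow> 'g \<times> real \<times> 'g option" where
  "decE G p = (the (snd (p 1)), cone_pt (the (snd (p 0)) \<otimes>\<^bsub>G\<^esub> inv\<^bsub>G\<^esub> (the (snd (p 1)))) (min 1 (3 * fst (p 0))))"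

lemma iotaE_cone: "iotaE G n (cone_pt g t) = En_pt n (gv2 n g \<one>\<^bsub>G\<^esub>) (tvec n t)"
  by (auto simp: iotaE_def cone_pt_def En_pt_def gv2_def tvec_def fun_eq_iff)

lemma En_ract_pt: "En_ract G (En_pt n (gv2 n a b) tv) h = En_pt n (gv2 n (a \<otimes>\<^bsub>G\<^esub> h) (b \<otimes>\<^bsub>G\<^esub> h)) tv"
  by (auto simp: En_ract_def En_pt_def gv2_def fun_eq_iff)

lemma fst_En_pt1: "fst (En_pt n g t 1) = (if 1 \<le> n then t 1 else 0)"
  by (simp add: En_pt_def)

lemma decE_pt: "1 \<le> n \<Longrightarrow> 1/2 < t 1 \<Longrightarrow>
   decE G (En_pt n g t) = (g 1, cone_pt (g 0 \<otimes>\<^bsub>G\<^esub> inv\<^bsub>G\<^esub> (g 1)) (min 1 (3 * t 0)))"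
  by (simp add: decE_def En_pt_def cone_pt_def)

lemma tvec_sum: "1 \<le> n \<Longrightarrow> sum (tvec n t) {..n} = 1"
proof -
  assume n: "1 \<le> n"
  have "sum (tvec n t) {..n} = sum (\<lambda>i. (if i = 0 then t / 3 else 0) + (if i = 1 then 1 - t / 3 else 0)) {..n}"
    by (rule sum.cong) (auto simp: tvec_def)
  also have "\<dots> = t / 3 + (1 - t / 3)"
    using n by (simp add: sum.distrib)
  finally show ?thesis by simp
qed

lemma topspace_simplex:
  "topspace (simplex_top n) = (\<Pi>\<^sub>E i\<in>{..n}. (UNIV :: real set)) \<inter> {t. (\<forall>i\<le>n. 0 \<le> t i) \<and> sum t {..n} = 1}"
  by (simp add: simplex_top_def)

lemma Enq_cont: "continuous_map (prod_topology (product_topology (\<lambda>_. T) {..n}) (simplex_top n)) (En_top T n) (\<lambda>(g, t). En_pt n g t)"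
  unfolding En_top_def by (rule quot_cont)

lemma En_pt_top:
  assumes "g \<in> (\<Pi>\<^sub>E i\<in>{..n}. topspace T)" "t \<in> topspace (simplex_top n)"
  shows "En_pt n g t \<in> topspace (En_top T n)"
  unfolding En_top_def topspace_quot_top
  by (rule rev_image_eqI[of "(g, t)"]) (use assms in auto)

lemma simplex_proj: "k \<le> n \<Longrightarrow> continuous_map (simplex_top n) euclideanreal (\<lambda>t. t k)"
  unfolding simplex_top_def
  by (rule continuous_map_from_subtopology) (use continuous_map_product_projection[of k "{..n}" "\<lambda>_. euclideanreal"] in simp)

lemma gproj: "k \<le> n \<Longrightarrow> continuous_map (product_topology (\<lambda>_. T) {..n}) T (\<lambda>g. g k)"
  using continuous_map_product_projection[of k "{..n}" "\<lambda>_. T"] by simp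

lemma iotaE_cont:
  assumes tg: "topological_group G T" and n: "1 \<le> n"
  shows "continuous_map (cone_top T) (En_top T n) (iotaE G n)"
  unfolding cone_top_def
proof (rule quot_univ)
  interpret group G by (rule tg_group[OF tg])
  have one: "\<one>\<^bsub>G\<^esub> \<in> topspace T" using tg by (simp add: tg_space)
  let ?Y = "prod_topology T unit_interval"
  have c1: "continuous_map ?Y (product_topology (\<lambda>_. T) {..n}) (\<lambda>x. gv2 n (fst x) \<one>\<^bsub>G\<^esub>)"
    unfolding continuous_map_componentwise
  proof (intro conjI ballI)
    show "(\<lambda>x. gv2 n (fst x) \<one>\<^bsub>G\<^esub>) ` topspace ?Y \<subseteq> extensional {..n}"
      by (auto simp: gv2_def extensional_def)
    fix k assume "k \<in> {..n}"
    show "continuous_map ?Y T (\<lambda>x. gv2 n (fst x) \<one>\<^bsub>G\<^esub> k)"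
    proof (cases "k = 0")
      case True
      then show ?thesis by (simp add: gv2_def continuous_map_fst)
    next
      case False
      with \<open>k \<in> {..n}\<close> show ?thesis by (simp add: gv2_def one)
    qed
  qed
  have c2: "continuous_map ?Y (simplex_top n) (\<lambda>x. tvec n (snd x))"
    unfolding simplex_top_def continuous_map_in_subtopology
  proof (intro conjI)
    show "continuous_map ?Y (product_topology (\<lambda>_. euclideanreal) {..n}) (\<lambda>x. tvec n (snd x))"
      unfolding continuous_map_componentwise
    proof (intro conjI ballI)
      show "(\<lambda>x. tvec n (snd x)) ` topspace ?Y \<subseteq> extensional {..n}"
        by (auto simp: tvec_def extensional_def)
      fix k assume k: "k \<in> {..n}"
      have s: "continuous_map ?Y euclideanreal snd" by (rule snd_real_cont)
      have "continuous_map ?Y euclideanreal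
              (\<lambda>x. if k = 0 then snd x / 3 else if k = 1 then 1 - snd x / 3 else 0)"
        by (auto intro!: continuous_map_real_divide continuous_map_diff s)
      then show "continuous_map ?Y euclideanreal (\<lambda>x. tvec n (snd x) k)"
        using k by (simp add: tvec_def)
    qed
    show "(\<lambda>x. tvec n (snd x)) \<in> topspace ?Y \<rightarrow> {t. (\<forall>i\<le>n. 0 \<le> t i) \<and> sum t {..n} = 1}"
      using n apply (clarsimp simp: tvec_sum)
      apply (auto simp: tvec_def)
      done
  qed
  have c3: "continuous_map ?Y (En_top T n) (\<lambda>x. En_pt n (gv2 n (fst x) \<one>\<^bsub>G\<^esub>) (tvec n (snd x)))"
    using continuous_map_compose[OF continuous_map_pairedI[OF c1 c2] Enq_cont] by (simp add: o_def)
  show "continuous_map ?Y (En_top T n) (\<lambda>x. iotaE G n ((\<lambda>(g, t). cone_pt g t) x))"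
    by (rule continuous_map_eq[OF c3]) (simp add: case_prod_unfold iotaE_cone)
qed



lemma fst_En_pt_Suc0: "fst (En_pt n g t (Suc 0)) = (if 1 \<le> n then t 1 else 0)"
  by (simp add: En_pt_def)

lemma VE_open:
  assumes tg: "topological_group G T"
    and W: "openin (prod_topology T (prod_topology T unit_interval))
         {x \<in> topspace (prod_topology T (prod_topology T unit_interval)). (\<lambda>(h, g, t). (h, cone_pt g t)) x \<in> U}"
  shows "openin (En_top T m) ({p. 1/2 < fst (p 1) \<and> decE G p \<in> U} \<inter> topspace (En_top T m))"
proof -
  interpret group G by (rule tg_group[OF tg])
  have ts: "topspace T = carrier G" by (rule tg_space[OF tg])
  let ?X = "prod_topology T (prod_topology T unit_interval)"
  let ?W = "{x \<in> topspace ?X. (\<lambda>(h, g, t). (h, cone_pt g t)) x \<in> U}"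
  let ?Xm = "prod_topology (product_topology (\<lambda>_. T) {..m}) (simplex_top m)"
  let ?qm = "\<lambda>(g, t). En_pt m g t"
  let ?VE = "{p. 1/2 < fst (p 1) \<and> decE G p \<in> U}"
  let ?F = "\<lambda>x. (fst x 1, fst x 0 \<otimes>\<^bsub>G\<^esub> inv\<^bsub>G\<^esub> (fst x 1), min 1 (3 * snd x 0))"
  have pre: "{x \<in> topspace ?Xm. ?qm x \<in> ?VE \<inter> topspace (En_top T m)} = {x \<in> topspace ?Xm. ?qm x \<in> ?VE}"
  proof (rule Collect_cong)
    fix x
    have "x \<in> topspace ?Xm \<Longrightarrow> ?qm x \<in> topspace (En_top T m)"
      by (rule funcset_mem[OF continuous_map_funspace[OF Enq_cont[of T m]]])
    then show "(x \<in> topspace ?Xm \<and> ?qm x \<in> ?VE \<inter> topspace (En_top T m)) = (x \<in> topspace ?Xm \<and> ?qm x \<in> ?VE)"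
      by (simp only: Int_iff) iprover
  qed
  have O: "openin ?Xm {x \<in> topspace ?Xm. ?qm x \<in> ?VE}"
  proof (cases "m = 0")
    case True
    have nq: "\<And>x. \<not> (?qm x \<in> ?VE)"
    proof -
      fix x show "\<not> (?qm x \<in> ?VE)" using True by (cases x) (simp add: En_pt_def)
    qed
    have e: "{x \<in> topspace ?Xm. ?qm x \<in> ?VE} = {}"
    proof (rule equals0I)
      fix x assume "x \<in> {x \<in> topspace ?Xm. ?qm x \<in> ?VE}"
      then have "?qm x \<in> ?VE" by (simp only: mem_Collect_eq)
      with nq[of x] show False by (rule notE)
    qed
    show ?thesis unfolding e by (rule openin_empty)
  next
    case False
    then have m: "1 \<le> m" by simp
    have g1: "continuous_map ?Xm T (\<lambda>x. fst x 1)"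
      using continuous_map_compose[OF continuous_map_fst gproj[of 1 m T]] m by (simp add: o_def)
    have g0: "continuous_map ?Xm T (\<lambda>x. fst x 0)"
      using continuous_map_compose[OF continuous_map_fst gproj[of 0 m T]] by (simp add: o_def)
    have s1: "continuous_map ?Xm euclideanreal (\<lambda>x. snd x 1)"
      using continuous_map_compose[OF continuous_map_snd simplex_proj[of 1 m]] m by (simp add: o_def)
    have s0: "continuous_map ?Xm euclideanreal (\<lambda>x. snd x 0)"
      using continuous_map_compose[OF continuous_map_snd simplex_proj[of 0 m]] by (simp add: o_def)
    have mi: "continuous_map ?Xm unit_interval (\<lambda>x. min 1 (3 * snd x 0))"
    proof (rule cont_into_unit)
      show "continuous_map ?Xm euclideanreal (\<lambda>x. min 1 (3 * snd x 0))"
        by (intro continuous_map_real_min continuous_map_real_mult s0) simp_all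
      fix x assume "x \<in> topspace ?Xm"
      then have "0 \<le> snd x 0" by (auto simp: topspace_simplex)
      then show "min 1 (3 * snd x 0) \<in> {0..1}" by auto
    qed
    have Fc: "continuous_map ?Xm ?X ?F"
      by (intro continuous_map_pairedI g1 mi mult_cont[OF tg] inv_cont[OF tg] g0)
    have o1: "openin ?Xm {x \<in> topspace ?Xm. snd x 1 \<in> {1/2<..}}"
      by (rule openin_continuous_map_preimage[OF s1]) simp
    have o2: "openin ?Xm {x \<in> topspace ?Xm. ?F x \<in> ?W}"
      by (rule openin_continuous_map_preimage[OF Fc W])
    have eqs: "{x \<in> topspace ?Xm. ?qm x \<in> ?VE} =
        {x \<in> topspace ?Xm. snd x 1 \<in> {1/2<..}} \<inter> {x \<in> topspace ?Xm. ?F x \<in> ?W}"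
    proof (intro equalityI subsetI)
      fix x assume x: "x \<in> {x \<in> topspace ?Xm. ?qm x \<in> ?VE}"
      obtain g t where xe: "x = (g, t)" by (cases x)
      from x xe m have gm: "g \<in> (\<Pi>\<^sub>E i\<in>{..m}. carrier G)" and tm: "t \<in> topspace (simplex_top m)"
        and t1: "1/2 < t 1" and inU: "decE G (En_pt m g t) \<in> U"
        by (auto simp: ts fst_En_pt1 fst_En_pt_Suc0)
      have g01: "g 0 \<in> carrier G" "g 1 \<in> carrier G" using gm m by auto
      have t0: "0 \<le> t 0" using tm by (auto simp: topspace_simplex)
      have "?F x \<in> topspace ?X" using g01 t0 by (simp add: xe ts)
      moreover have "(\<lambda>(h, g, t). (h, cone_pt g t)) (?F x) \<in> U"
        using inU decE_pt[where n=m and t=t and G=G and g=g, OF m t1] by (simp add: xe)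
      ultimately show "x \<in> {x \<in> topspace ?Xm. snd x 1 \<in> {1/2<..}} \<inter> {x \<in> topspace ?Xm. ?F x \<in> ?W}"
        using x t1 xe by simp
    next
      fix x assume x: "x \<in> {x \<in> topspace ?Xm. snd x 1 \<in> {1/2<..}} \<inter> {x \<in> topspace ?Xm. ?F x \<in> ?W}"
      obtain g t where xe: "x = (g, t)" by (cases x)
      from x xe have t1: "1/2 < t 1"
        and inU: "(g 1, cone_pt (g 0 \<otimes>\<^bsub>G\<^esub> inv\<^bsub>G\<^esub> (g 1)) (min 1 (3 * t 0))) \<in> U"
        by auto
      have "?qm x \<in> ?VE"
        using t1 inU decE_pt[where n=m and t=t and G=G and g=g, OF m t1] m by (simp add: xe fst_En_pt1 fst_En_pt_Suc0)
      then show "x \<in> {x \<in> topspace ?Xm. ?qm x \<in> ?VE}"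
        using x by simp
    qed
    show ?thesis unfolding eqs by (rule openin_Int[OF o1 o2])
  qed
  have sub: "?VE \<inter> topspace (En_top T m) \<subseteq> ?qm ` topspace ?Xm"
    unfolding En_top_def topspace_quot_top by blast
  show ?thesis
    using sub O pre unfolding En_top_def openin_quot_top by simp
qed

lemma eqE:
  assumes tg: "topological_group G T" and n: "1 \<le> n"
    and g: "g \<in> carrier G" and h: "h \<in> carrier G" and t: "0 \<le> t" "t \<le> 1"
  shows "En_ract G (iotaE G n (cone_pt g t)) h \<in> topspace (En_top T n) \<and>
     (En_ract G (iotaE G n (cone_pt g t)) h \<in> {p. 1/2 < fst (p 1) \<and> decE G p \<in> U} \<longleftrightarrow> (h, cone_pt g t) \<in> U)"
proof -
  interpret group G by (rule tg_group[OF tg])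
  have ts: "topspace T = carrier G" by (rule tg_space[OF tg])
  have e1: "En_ract G (iotaE G n (cone_pt g t)) h = En_pt n (gv2 n (g \<otimes>\<^bsub>G\<^esub> h) h) (tvec n t)"
    by (simp add: iotaE_cone En_ract_pt h)
  have gm: "gv2 n (g \<otimes>\<^bsub>G\<^esub> h) h \<in> (\<Pi>\<^sub>E i\<in>{..n}. topspace T)"
    using g h by (auto simp: gv2_def ts PiE_iff extensional_def)
  have tm: "tvec n t \<in> topspace (simplex_top n)"
    using t n by (auto simp: topspace_simplex tvec_sum PiE_iff extensional_def) (auto simp: tvec_def)
  have t1: "1/2 < tvec n t 1" using t n by (simp add: tvec_def)
  have d: "decE G (En_pt n (gv2 n (g \<otimes>\<^bsub>G\<^esub> h) h) (tvec n t)) = (h, cone_pt g t)"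
    using decE_pt[where n=n and t="tvec n t" and G=G and g="gv2 n (g \<otimes>\<^bsub>G\<^esub> h) h", OF n t1] n g h t
    by (simp add: gv2_def tvec_def m_assoc)
  show ?thesis
    unfolding e1 using En_pt_top[OF gm tm] t1 d n by (simp add: fst_En_pt1 fst_En_pt_Suc0)
qed

lemma En_case:
  assumes tg: "topological_group G T" and n: "1 \<le> n"
    and cont: "continuous_map (prod_topology (En_top T n) T) (En_top T n) (\<lambda>(p, g). En_ract G p g)"
    and sub: "U \<subseteq> topspace (prod_topology T (cone_top T))"
    and W: "openin (prod_topology T (prod_topology T unit_interval))
         {x \<in> topspace (prod_topology T (prod_topology T unit_interval)). (\<lambda>(h, g, t). (h, cone_pt g t)) x \<in> U}"
  shows "openin (prod_topology T (cone_top T)) U"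
proof (rule key[OF tg cont iotaE_cont[OF tg n] VE_open[OF tg W, of n] _ sub])
  fix g h and t :: real assume g: "g \<in> carrier G" and t: "0 \<le> t" "t \<le> 1" and h: "h \<in> carrier G"
  show "En_ract G (iotaE G n (cone_pt g t)) h \<in> {p. 1/2 < fst (p 1) \<and> decE G p \<in> U} \<inter> topspace (En_top T n)
        \<longleftrightarrow> (h, cone_pt g t) \<in> U"
    using eqE[OF tg n g h t, of U] by blast
qed

lemma istop_Einf:
  "istopology (\<lambda>U. U \<subseteq> (\<Union>n. topspace (En_top T n)) \<and> (\<forall>n. openin (En_top T n) (U \<inter> topspace (En_top T n))))"
  unfolding istopology_def
proof (intro conjI allI impI ballI)
  fix S S' :: "(nat \<Rightarrow> real \<times> 'a option) set"
  assume a: "S \<subseteq> (\<Union>n. topspace (En_top T n)) \<and> (\<forall>n. openin (En_top T n) (S \<inter> topspace (En_top T n)))"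
    and b: "S' \<subseteq> (\<Union>n. topspace (En_top T n)) \<and> (\<forall>n. openin (En_top T n) (S' \<inter> topspace (En_top T n)))"
  show "S \<inter> S' \<subseteq> (\<Union>n. topspace (En_top T n))" using a by blast
  fix n
  have "S \<inter> S' \<inter> topspace (En_top T n) = (S \<inter> topspace (En_top T n)) \<inter> (S' \<inter> topspace (En_top T n))" by blast
  then show "openin (En_top T n) (S \<inter> S' \<inter> topspace (En_top T n))"
    using a b openin_Int by metis
next
  fix K :: "(nat \<Rightarrow> real \<times> 'a option) set set"
  assume a: "\<forall>S\<in>K. S \<subseteq> (\<Union>n. topspace (En_top T n)) \<and> (\<forall>n. openin (En_top T n) (S \<inter> topspace (En_top T n)))"
  then show "\<Union>K \<subseteq> (\<Union>n. topspace (En_top T n))" by blast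
  fix n
  have "\<Union>K \<inter> topspace (En_top T n) = \<Union>((\<lambda>S. S \<inter> topspace (En_top T n)) ` K)" by blast
  moreover have "openin (En_top T n) (\<Union>((\<lambda>S. S \<inter> topspace (En_top T n)) ` K))"
    using a by (intro openin_Union) blast
  ultimately show "openin (En_top T n) (\<Union>K \<inter> topspace (En_top T n))" by simp
qed

lemma openin_Einf:
  "openin (Einf_top T) U \<longleftrightarrow> U \<subseteq> (\<Union>n. topspace (En_top T n)) \<and> (\<forall>n. openin (En_top T n) (U \<inter> topspace (En_top T n)))"
  unfolding Einf_top_def by (simp add: topology_inverse'[OF istop_Einf])

lemma topspace_Einf: "topspace (Einf_top T) = (\<Union>n. topspace (En_top T n))"
proof
  show "topspace (Einf_top T) \<subseteq> (\<Union>n. topspace (En_top T n))"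
    using openin_topspace[of "Einf_top T"] unfolding openin_Einf by (rule conjunct1)
  have "openin (Einf_top T) (\<Union>n. topspace (En_top T n))"
    unfolding openin_Einf
  proof (intro conjI allI)
    fix n
    have "(\<Union>n. topspace (En_top T n)) \<inter> topspace (En_top T n) = topspace (En_top T n)" by blast
    then show "openin (En_top T n) ((\<Union>n. topspace (En_top T n)) \<inter> topspace (En_top T n))" by simp
  qed simp
  then show "(\<Union>n. topspace (En_top T n)) \<subseteq> topspace (Einf_top T)" by (rule openin_subset)
qed

lemma incl_cont: "continuous_map (En_top T n) (Einf_top T) (\<lambda>x. x)"
  unfolding continuous_map_def
proof (intro conjI allI impI)
  show "(\<lambda>x. x) \<in> topspace (En_top T n) \<rightarrow> topspace (Einf_top T)"
    by (auto simp: topspace_Einf)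
  fix U assume "openin (Einf_top T) U"
  then have "openin (En_top T n) (U \<inter> topspace (En_top T n))" by (simp add: openin_Einf)
  moreover have "{x \<in> topspace (En_top T n). x \<in> U} = U \<inter> topspace (En_top T n)" by blast
  ultimately show "openin (En_top T n) {x \<in> topspace (En_top T n). x \<in> U}" by simp
qed

lemma Einf_case:
  assumes tg: "topological_group G T"
    and cont: "continuous_map (prod_topology (Einf_top T) T) (Einf_top T) (\<lambda>(p, g). En_ract G p g)"
    and sub: "U \<subseteq> topspace (prod_topology T (cone_top T))"
    and W: "openin (prod_topology T (prod_topology T unit_interval))
         {x \<in> topspace (prod_topology T (prod_topology T unit_interval)). (\<lambda>(h, g, t). (h, cone_pt g t)) x \<in> U}"
  shows "openin (prod_topology T (cone_top T)) U"
proof -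
  let ?VE = "{p. 1/2 < fst (p 1) \<and> decE G p \<in> U}"
  have ic: "continuous_map (cone_top T) (Einf_top T) (iotaE G 1)"
    using continuous_map_compose[OF iotaE_cont[OF tg, of 1] incl_cont] by (simp add: o_def)
  have Vo: "openin (Einf_top T) (?VE \<inter> topspace (Einf_top T))"
    unfolding openin_Einf
  proof (intro conjI allI)
    show "?VE \<inter> topspace (Einf_top T) \<subseteq> (\<Union>n. topspace (En_top T n))" by (auto simp: topspace_Einf)
    fix m
    have "?VE \<inter> topspace (Einf_top T) \<inter> topspace (En_top T m) = ?VE \<inter> topspace (En_top T m)"
      by (auto simp: topspace_Einf)
    then show "openin (En_top T m) (?VE \<inter> topspace (Einf_top T) \<inter> topspace (En_top T m))"
      using VE_open[OF tg W, of m] by simp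
  qed
  show ?thesis
  proof (rule key[OF tg cont ic Vo _ sub])
    fix g h and t :: real assume g: "g \<in> carrier G" and t: "0 \<le> t" "t \<le> 1" and h: "h \<in> carrier G"
    show "En_ract G (iotaE G 1 (cone_pt g t)) h \<in> ?VE \<inter> topspace (Einf_top T) \<longleftrightarrow> (h, cone_pt g t) \<in> U"
      using eqE[OF tg _ g h t, of 1 U] by (auto simp: topspace_Einf)
  qed
qed

theorem mainTheorem6:
  fixes G :: "('g, 'b) monoid_scheme" and T :: "'g topology"
  assumes "topological_group G T"
    and "Hausdorff_space T"
    and "\<not> continuous_map (prod_topology T (cone_top T)) (cone_top T)
              (\<lambda>(h, (t, a)). (t, map_option (\<lambda>g. h \<otimes>\<^bsub>G\<^esub> g) a))
         \<or> quot_top (prod_topology T (prod_topology T unit_interval)) (\<lambda>(h, g, t). (h, cone_pt g t))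
             \<noteq> prod_topology T (cone_top T)"
  shows "\<not> continuous_map (prod_topology (join_top T) T) (join_top T) (\<lambda>(p, g). join_ract G p g)
       \<and> (\<forall>n\<ge>1. \<not> continuous_map (prod_topology (En_top T n) T) (En_top T n) (\<lambda>(p, g). En_ract G p g))
       \<and> \<not> continuous_map (prod_topology (Einf_top T) T) (Einf_top T) (\<lambda>(p, g). En_ract G p g)"
proof (intro conjI allI impI notI)
  assume c: "continuous_map (prod_topology (join_top T) T) (join_top T) (\<lambda>(p, g). join_ract G p g)"
  show False using final[OF assms(1) join_case[OF assms(1) c]] assms(3) by blast
next
  fix n :: nat assume n: "1 \<le> n"
    and c: "continuous_map (prod_topology (En_top T n) T) (En_top T n) (\<lambda>(p, g). En_ract G p g)"
  show False using final[OF assms(1) En_case[OF assms(1) n c]] assms(3) by blast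
next
  assume c: "continuous_map (prod_topology (Einf_top T) T) (Einf_top T) (\<lambda>(p, g). En_ract G p g)"
  show False using final[OF assms(1) Einf_case[OF assms(1) c]] assms(3) by blast
qed


end
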